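(* Let $m\ge 2$ and $\alpha\in[0,1]$. Every deterministic voting rule $f$ that takes ranked preferences with intensities as input has, under mandatory elicitation of the intensities, metric distortion $$\mathsf{dist}_\alpha(f)\;\ge\;1+2\max\left(\alpha,\ \frac{1-\alpha^{\lfloor m/2\rfloor}}{1+\alpha^{\lfloor m/2\rfloor}}\right).$$
   Context: An election $\mathcal E=(N,A,\vec\sigma)$ has a finite set $N$ of $n$ agents, a set $A$ of $m$ alternatives, and a profile $\vec\sigma=(\sigma_1,\dots,\sigma_n)$. Each $\sigma_i=(\pi_i,\Join_i)$ consists of a bijection $\pi_i:[m]\to A$, where $\pi_i(1)$ is agent $i$'s most preferred alternative, and a map $\Join_i:[m-1]\to\{\succ,\succ\!\!\succ\}$. Here $\Join_i(j)=\,\succ\!\!\succ$ means a strong preference for $\pi_i(j)$ over $\pi_i(j+1)$, and $\Join_i(j)=\,\succ$ means an ordinary preference. A metric $d$ on $N\cup A$ is nonnegative and symmetric, satisfies the triangle inequality, and has $d(x,x)=0$. For $\alpha\in[0,1]$, the profile $\vec\sigma$ is $\alpha$-consistent with $d$ under mandatory elicitation if for every agent $i$ and every $j\in[m-1]$: - if $\Join_i(j)=\,\succ$, then $d(i,\pi_i(j+1))\ge d(i,\pi_i(j))>\alpha\, d(i,\pi_i(j+1))$; - if $\Join_i(j)=\,\succ\!\!\succ$, then $d(i,\pi_i(j))\le \alpha\, d(i,\pi_i(j+1))$. The social cost of $a$ is $\mathrm{sc}_d(a)=\sum_{i\in N}d(i,a)$. The distortion of $a$ is $\mathsf{dist}_\alpha(a,\mathcal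 E)=\sup_{d}\ \mathrm{sc}_d(a)/\min_{b\in A}\mathrm{sc}_d(b)$, where the supremum is over metrics $d$ with which $\vec\sigma$ is $\alpha$-consistent under mandatory elicitation. A deterministic voting rule $f$ maps every profile (for any number of agents) over the $m$ alternatives to an alternative. Its distortion is $\mathsf{dist}_\alpha(f)=\sup_{\mathcal E}\mathsf{dist}_\alpha(f(\vec\sigma),\mathcal E)$, with the supremum over all elections with $m$ alternatives. *)

theory Defs
  imports Complex_Main "HOL-Library.Extended_Real"
begin

(* Agents: N = {0..<n}; alternatives: A = {0..<m}.
   Ranks are 0-indexed: rank r in {0..<m} (r = 0 is the top choice), i.e. paper's pi_i(j) = rk i (j-1).
   A profile is a pair (rk, strong):
     rk i r      = alternative ranked at position r by agent i,
     strong i r  = True  iff  Join_i(r+1) is the strong preference (r < m-1),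
                   False iff  it is the ordinary preference.
   Points of the metric space N \<union> A are encoded in nat + nat: Inl i = agent i, Inr a = alternative a. *)

type_synonym ranking = "nat \<Rightarrow> nat \<Rightarrow> nat"
type_synonym intensity = "nat \<Rightarrow> nat \<Rightarrow> bool"
type_synonym point = "nat + nat"

definition valid_profile :: "nat \<Rightarrow> nat \<Rightarrow> ranking \<Rightarrow> bool" where
  "valid_profile m n rk \<longleftrightarrow> (\<forall>i<n. bij_betw (rk i) {0..<m} {0..<m})"

definition carrier :: "nat \<Rightarrow> nat \<Rightarrow> point set" where
  "carrier m n = Inl ` {0..<n} \<union> Inr ` {0..<m}"

definition is_metric_on :: "point set \<Rightarrow> (point \<Rightarrow> point \<Rightarrow> real) \<Rightarrow> bool" where
  "is_metric_on S d \<longleftrightarrow>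
     (\<forall>x\<in>S. \<forall>y\<in>S. d x y \<ge> 0 \<and> d x y = d y x) \<and>
     (\<forall>x\<in>S. d x x = 0) \<and>
     (\<forall>x\<in>S. \<forall>y\<in>S. \<forall>z\<in>S. d x z \<le> d x y + d y z)"

definition alpha_consistent ::
  "real \<Rightarrow> nat \<Rightarrow> nat \<Rightarrow> ranking \<Rightarrow> intensity \<Rightarrow> (point \<Rightarrow> point \<Rightarrow> real) \<Rightarrow> bool" where
  "alpha_consistent \<alpha> m n rk strong d \<longleftrightarrow>
     (\<forall>i<n. \<forall>j. j + 1 < m \<longrightarrow>
        (if strong i j
         then d (Inl i) (Inr (rk i j)) \<le> \<alpha> * d (Inl i) (Inr (rk i (j+1)))
         else d (Inl i) (Inr (rk i (j+1))) \<ge> d (Inl i) (Inr (rk i j)) \<and>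
              d (Inl i) (Inr (rk i j)) > \<alpha> * d (Inl i) (Inr (rk i (j+1)))))"

definition social_cost :: "nat \<Rightarrow> (point \<Rightarrow> point \<Rightarrow> real) \<Rightarrow> nat \<Rightarrow> real" where
  "social_cost n d a = (\<Sum>i<n. d (Inl i) (Inr a))"

(* ratio sc(a) / min_b sc(b), in the extended reals; x/0 = \<infinity> for x > 0 and 0/0 = 1 *)
definition cost_ratio :: "nat \<Rightarrow> nat \<Rightarrow> (point \<Rightarrow> point \<Rightarrow> real) \<Rightarrow> nat \<Rightarrow> ereal" where
  "cost_ratio m n d a =
     (let opt = Min (social_cost n d ` {0..<m}) in
      if opt > 0 then ereal (social_cost n d a / opt)
      else if social_cost n d a = 0 then 1 else \<infinity>)"

definition distortion_alt ::
  "real \<Rightarrow> nat \<Rightarrow> nat \<Rightarrow> ranking \<Rightarrow> intensity \<Rightarrow> nat \<Rightarrow> ereal" where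
  "distortion_alt \<alpha> m n rk strong a =
     (SUP d \<in> {d. is_metric_on (carrier m n) d \<and> alpha_consistent \<alpha> m n rk strong d}.
        cost_ratio m n d a)"

(* A deterministic voting rule: maps (number of agents, profile) to an alternative,
   depending only on the profile itself (not on junk values outside the domain). *)
definition voting_rule :: "nat \<Rightarrow> (nat \<Rightarrow> ranking \<Rightarrow> intensity \<Rightarrow> nat) \<Rightarrow> bool" where
  "voting_rule m f \<longleftrightarrow>
     (\<forall>n rk strong. n \<ge> 1 \<longrightarrow> valid_profile m n rk \<longrightarrow> f n rk strong < m) \<and>
     (\<forall>n rk strong rk' strong'.
        (\<forall>i<n. \<forall>r<m. rk i r = rk' i r) \<longrightarrow>
        (\<forall>i<n. \<forall>r. r + 1 < m \<longrightarrow> strong i r = strong' i r) \<longrightarrow>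
        f n rk strong = f n rk' strong')"

definition distortion_rule :: "real \<Rightarrow> nat \<Rightarrow> (nat \<Rightarrow> ranking \<Rightarrow> intensity \<Rightarrow> nat) \<Rightarrow> ereal" where
  "distortion_rule \<alpha> m f =
     (SUP e \<in> {(n, rk, strong). n \<ge> 1 \<and> valid_profile m n rk}.
        (case e of (n, rk, strong) \<Rightarrow> distortion_alt \<alpha> m n rk strong (f n rk strong)))"

end

theory Submission
  imports Defs
begin

definition linf :: "(point \<Rightarrow> real \<times> real) \<Rightarrow> point \<Rightarrow> point \<Rightarrow> real" where
  "linf P u v = max \<bar>fst (P u) - fst (P v)\<bar> \<bar>snd (P u) - snd (P v)\<bar>"

lemma linf_metric: "is_metric_on S (linf P)"
  unfolding is_metric_on_def linf_def
  by (auto simp: abs_minus_commute max_def split: abs_split)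

lemma ratio_ge:
  assumes "\<And>x. x < m \<Longrightarrow> social_cost n d x > 0" "w < m" "z < m"
  shows "cost_ratio m n d z \<ge> ereal (social_cost n d z / social_cost n d w)"
proof -
  let ?S = "social_cost n d ` {0..<m}"
  have fin: "finite ?S" and ne: "?S \<noteq> {}" using assms(2) by auto
  have "Min ?S \<in> ?S" using fin ne by (rule Min_in)
  then have pos: "Min ?S > 0" using assms(1) by auto
  have le: "Min ?S \<le> social_cost n d w" using fin assms(2) by (intro Min_le) auto
  have nn: "social_cost n d z \<ge> 0" using assms(1)[OF assms(3)] by simp
  have "social_cost n d z / social_cost n d w \<le> social_cost n d z / Min ?S"
    using pos le nn by (intro divide_left_mono) auto
  then show ?thesis using pos unfolding cost_ratio_def Let_def by simp
qed

lemma ereal_le_SUP_approx: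
  assumes "\<And>y. y < B \<Longrightarrow> \<exists>i\<in>A. ereal y \<le> g i"
  shows "ereal B \<le> (SUP i\<in>A. g i)"
proof (rule dense_le)
  fix x assume "x < ereal B"
  then show "x \<le> (SUP i\<in>A. g i)"
  proof (cases x)
    case (real r)
    then obtain i where "i \<in> A" "ereal r \<le> g i" using assms \<open>x < ereal B\<close> by auto
    then show ?thesis using real by (metis SUP_upper2)
  qed auto
qed

definition rk1 :: ranking where "rk1 i r = (if i = 1 \<and> r < 2 then 1 - r else r)"

lemma valid1: "m \<ge> 2 \<Longrightarrow> valid_profile m 2 rk1"
  unfolding valid_profile_def
proof (intro allI impI)
  fix i :: nat assume "m \<ge> 2" "i < 2"
  show "bij_betw (rk1 i) {0..<m} {0..<m}"
    by (rule bij_betw_byWitness[where f'="rk1 i"]) (use \<open>m \<ge> 2\<close> in \<open>auto simp: rk1_def\<close>)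
qed

lemma distr_ge:
  assumes "n \<ge> 1" "valid_profile m n rk" "is_metric_on (carrier m n) d"
    "alpha_consistent \<alpha> m n rk strong d" "B \<le> cost_ratio m n d (f n rk strong)"
  shows "B \<le> distortion_rule \<alpha> m f"
proof -
  have "B \<le> distortion_alt \<alpha> m n rk strong (f n rk strong)"
    unfolding distortion_alt_def using assms(3-5) by (intro SUP_upper2[where i=d]) auto
  also have "\<dots> \<le> distortion_rule \<alpha> m f"
    unfolding distortion_rule_def using assms(1,2)
    by (intro SUP_upper2[where i="(n, rk, strong)"]) auto
  finally show ?thesis .
qed

lemma rk1_simps: "rk1 i 0 = (if i = 1 then 1 else 0)" "rk1 i (Suc 0) = (if i = 1 then 0 else 1)"
  "j \<ge> 2 \<Longrightarrow> rk1 i j = j"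
  by (auto simp: rk1_def)

lemma pow_step: "0 < (\<alpha>::real) \<Longrightarrow> c * (1/\<alpha>)^j \<le> \<alpha> * (c * (1/\<alpha>)^(Suc j))"
  by (simp add: field_simps)

lemma prof1:
  assumes m: "m \<ge> 2" and a: "0 < \<alpha>" "\<alpha> \<le> 1" and vr: "voting_rule m f"
  shows "ereal (1 + 2*\<alpha>) \<le> distortion_rule \<alpha> m f"
proof -
  define st :: intensity where "st = (\<lambda>_ _. True)"
  define z where "z = f 2 rk1 st"
  have zm: "z < m" using vr valid1[OF m] unfolding voting_rule_def z_def by auto
  have ge1: "\<And>x. (1/\<alpha>)^x \<ge> 1" using a by (simp add: one_le_power)
  show ?thesis
  proof (cases "z < 2")
    case True
    define w where "w = 1 - z"
    define p where "p = 2*\<alpha>/(1+\<alpha>)"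
    define P :: "point \<Rightarrow> real\<times>real" where "P = (\<lambda>u. case u of Inl i \<Rightarrow> (if i = w then (2,0) else (p,0))
       | Inr x \<Rightarrow> (if x = z then (0,0) else if x = w then (2,0) else (0, 2*(1/\<alpha>)^x)))"
    have p0: "p \<ge> 0" "p \<le> 1" "p \<le> \<alpha>*(2-p)" "(2+p)/(2-p) = 1+2*\<alpha>"
      using a unfolding p_def by (auto simp: field_simps)
    have zw: "(z = 0 \<and> w = 1) \<or> (z = 1 \<and> w = 0)" using True w_def by auto
    have dW: "linf P (Inl w) (Inr x) = (if x = z then 2 else if x = w then 0 else 2*(1/\<alpha>)^x)" for x
      using zw ge1[of x] unfolding P_def linf_def by auto
    have dZ: "linf P (Inl z) (Inr x) = (if x = z then p else if x = w then 2-p else 2*(1/\<alpha>)^x)" for x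
      using zw ge1[of x] p0 unfolding P_def linf_def by auto
    have sc: "social_cost 2 (linf P) x = linf P (Inl w) (Inr x) + linf P (Inl z) (Inr x)" for x
      using zw unfolding social_cost_def numeral_2_eq_2 by auto
    have cons: "alpha_consistent \<alpha> m 2 rk1 st (linf P)"
      unfolding alpha_consistent_def st_def if_True
    proof (intro allI impI)
      fix i j :: nat assume i: "i < 2" and j: "j + 1 < m"
      have "j = 0 \<or> j = 1 \<or> j \<ge> 2" by auto
      moreover have "i = z \<or> i = w" using i zw by auto
      ultimately show "linf P (Inl i) (Inr (rk1 i j)) \<le> \<alpha> * linf P (Inl i) (Inr (rk1 i (j + 1)))"
      proof (elim disjE)
        assume "j = 0" "i = z" then show ?thesis using zw dZ p0 by (auto simp: rk1_simps)
      next
        assume "j = 0" "i = w" then show ?thesis using zw dW a by (auto simp: rk1_simps)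
      next
        assume "j = 1" "i = z" then show ?thesis using zw dZ p0 a j rk1_simps(3)[of 2 z]
          by (auto simp: rk1_simps field_simps power2_eq_square)
      next
        assume "j = 1" "i = w" then show ?thesis using zw dW p0 a j rk1_simps(3)[of 2 w]
          by (auto simp: rk1_simps field_simps power2_eq_square)
      next
        assume "j \<ge> 2" "i = z" then show ?thesis using zw dZ a pow_step[OF a(1), of 2 j]
          by (auto simp: rk1_simps)
      next
        assume "j \<ge> 2" "i = w" then show ?thesis using zw dW a pow_step[OF a(1), of 2 j]
          by (auto simp: rk1_simps)
      qed
    qed
    have pos: "social_cost 2 (linf P) x > 0" for x
      using sc[of x] dW[of x] dZ[of x] p0 ge1[of x] by auto
    have "ereal (1 + 2*\<alpha>) = ereal (social_cost 2 (linf P) z / social_cost 2 (linf P) w)"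
      using sc dW dZ zw p0 by auto
    also have "\<dots> \<le> cost_ratio m 2 (linf P) z"
      using zm m zw by (intro ratio_ge pos) auto
    finally show ?thesis
      using m valid1[OF m] linf_metric cons unfolding z_def
      by (intro distr_ge[where n=2 and rk=rk1 and strong=st and d="linf P"]) auto
  next
    case False
    define P :: "point \<Rightarrow> real\<times>real" where "P = (\<lambda>u. case u of Inl i \<Rightarrow> (0,0)
       | Inr x \<Rightarrow> (if x < z then 0 else (1/\<alpha>)^x, 0))"
    have dd: "linf P (Inl i) (Inr x) = (if x < z then 0 else (1/\<alpha>)^x)" for i x
      using ge1[of x] unfolding P_def linf_def by auto
    have cons: "alpha_consistent \<alpha> m 2 rk1 st (linf P)"
      unfolding alpha_consistent_def st_def if_True
    proof (intro allI impI)
      fix i j :: nat assume i: "i < 2" and j: "j + 1 < m"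
      show "linf P (Inl i) (Inr (rk1 i j)) \<le> \<alpha> * linf P (Inl i) (Inr (rk1 i (j + 1)))"
      proof (cases "j \<ge> 2")
        case True
        then show ?thesis using dd a pow_step[OF a(1), of 1 j] by (auto simp: rk1_simps)
      next
        case False
        then have "rk1 i j < z" using \<open>\<not> z < 2\<close> by (auto simp: rk1_def)
        then show ?thesis using dd a ge1 by auto
      qed
    qed
    have sc: "social_cost 2 (linf P) x = 2 * (if x < z then 0 else (1/\<alpha>)^x)" for x
      unfolding social_cost_def numeral_2_eq_2 using dd by auto
    have "Min (social_cost 2 (linf P) ` {0..<m}) \<le> social_cost 2 (linf P) 0"
      using m by (intro Min_le) auto
    then have "\<not> Min (social_cost 2 (linf P) ` {0..<m}) > 0" using sc[of 0] False by auto
    moreover have "social_cost 2 (linf P) z \<noteq> 0" using sc[of z] ge1[of z] a by auto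
    ultimately have "cost_ratio m 2 (linf P) z = \<infinity>" unfolding cost_ratio_def Let_def by auto
    then show ?thesis
      using m valid1[OF m] linf_metric cons unfolding z_def
      by (intro distr_ge[where n=2 and rk=rk1 and strong=st and d="linf P"]) auto
  qed
qed

definition rk2 :: "nat \<Rightarrow> ranking" where "rk2 m i r = (if i = 1 then m - 1 - r else r)"

lemma rk2_inv: "r < m \<Longrightarrow> rk2 m i (rk2 m i r) = r" "r < m \<Longrightarrow> rk2 m i r < m"
  by (auto simp: rk2_def)

lemma valid2: "valid_profile m 2 (rk2 m)"
  unfolding valid_profile_def
proof (intro allI impI)
  fix i :: nat assume "i < 2"
  show "bij_betw (rk2 m i) {0..<m} {0..<m}"
    by (rule bij_betw_byWitness[where f'="rk2 m i"]) (auto simp: rk2_inv)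
qed

definition gfun :: "real \<Rightarrow> real \<Rightarrow> nat \<Rightarrow> real" where
  "gfun t \<mu> r = min (t / \<mu>^r) (t + 2)"

lemma gfun_props:
  assumes t: "0 < t" and mu: "0 < \<mu>" "\<mu> < 1" and al: "0 \<le> \<alpha>" "\<alpha> < \<mu>"
  shows "gfun t \<mu> r \<le> gfun t \<mu> (Suc r)" "\<alpha> * gfun t \<mu> (Suc r) < gfun t \<mu> r"
    "t \<le> gfun t \<mu> r" "gfun t \<mu> r \<le> t + 2" "gfun t \<mu> 0 = t"
proof -
  have p1: "\<mu>^r > 0" using mu by simp
  have p2: "\<mu>^Suc r \<le> \<mu>^r" using mu by (simp add: power_decreasing)
  have p3: "\<mu>^r \<le> 1" using mu by (simp add: power_le_one)
  have q1: "t / \<mu>^r \<le> t / \<mu>^Suc r" using p1 p2 t mu by (intro divide_left_mono) auto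
  then show "gfun t \<mu> r \<le> gfun t \<mu> (Suc r)" unfolding gfun_def by auto
  have q2: "t \<le> t / \<mu>^r" using p1 p3 t by (simp add: le_divide_eq)
  then show "t \<le> gfun t \<mu> r" unfolding gfun_def by auto
  show "gfun t \<mu> r \<le> t + 2" unfolding gfun_def by auto
  show "gfun t \<mu> 0 = t" unfolding gfun_def by auto
  show "\<alpha> * gfun t \<mu> (Suc r) < gfun t \<mu> r"
  proof (cases "t / \<mu>^r \<le> t + 2")
    case True
    have "\<alpha> * gfun t \<mu> (Suc r) \<le> \<alpha> * (t / \<mu>^Suc r)"
      using al unfolding gfun_def by (intro mult_left_mono) auto
    also have "\<dots> = (\<alpha> / \<mu>) * (t / \<mu>^r)" by (simp add: field_simps)
    also have "\<dots> < 1 * (t / \<mu>^r)"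
      using al mu t p1 by (intro mult_strict_right_mono) auto
    finally show ?thesis using True unfolding gfun_def by auto
  next
    case False
    then have "gfun t \<mu> r = t + 2" "gfun t \<mu> (Suc r) = t + 2" using q1 unfolding gfun_def by auto
    then show ?thesis using al mu t by auto
  qed
qed

lemma prof2_metric:
  assumes m: "m \<ge> 2" and al: "0 \<le> \<alpha>" "\<alpha> < 1" and u: "\<alpha>^(m div 2) < u" "u < 1" and zm: "z < m"
  shows "\<exists>d. is_metric_on (carrier m 2) d \<and> alpha_consistent \<alpha> m 2 (rk2 m) (\<lambda>_ _. False) d
     \<and> ereal ((3-u)/(1+u)) \<le> cost_ratio m 2 d z"
proof -
  define k where "k = m div 2"
  have k: "k \<ge> 1" "2*k \<le> m" using m unfolding k_def by auto
  have u0: "u > 0" using u al unfolding k_def[symmetric] by (meson le_less_trans zero_le_power)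
  define \<mu> where "\<mu> = root k u"
  have muk: "\<mu>^k = u" unfolding \<mu>_def using k u0 by (simp add: real_root_pow_pos)
  have mu: "0 < \<mu>" "\<mu> < 1" unfolding \<mu>_def using k u0 u by (auto simp: real_root_lt_1_iff)
  have amu: "\<alpha> < \<mu>"
  proof (rule ccontr)
    assume "\<not> \<alpha> < \<mu>"
    then have "\<mu>^k \<le> \<alpha>^k" using mu by (intro power_mono) auto
    then show False using muk u unfolding k_def by auto
  qed
  define F :: nat where "F = (if k \<le> z then 0 else 1)"
  define \<sigma> where "\<sigma> = rk2 m F"
  define w where "w = \<sigma> 0"
  have sz: "\<sigma> z \<ge> k" using k zm unfolding \<sigma>_def F_def rk2_def by auto
  define t where "t = 2*u/(1-u)"
  have t12: "t > 0" "t / u = t + 2" using u0 u unfolding t_def by (auto simp: field_simps)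
  have t3: "t + 3 = (3-u)/(1-u)" "t + 1 = (1+u)/(1-u)" using u unfolding t_def by (auto simp: field_simps)
  have "(t+3)/(t+1) = (3-u)/(1+u)" unfolding t3
  proof -
    have "1 - u \<noteq> 0" using u by auto
    then show "(3 - u) / (1 - u) / ((1 + u) / (1 - u)) = (3 - u) / (1 + u)" by simp
  qed
  note t = t12 this
  define g where "g = gfun t \<mu>"
  note gp = gfun_props[OF t(1) mu al(1) amu, folded g_def]
  define P :: "point \<Rightarrow> real\<times>real" where "P = (\<lambda>p. case p of Inl i \<Rightarrow> (if i = F then (0,1) else (t+1,0))
       | Inr a \<Rightarrow> (g (\<sigma> a), 1))"
  have dF: "linf P (Inl F) (Inr a) = g (\<sigma> a)" for a
    using gp(3)[of "\<sigma> a"] t unfolding P_def linf_def by auto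
  have dM: "i \<noteq> F \<Longrightarrow> linf P (Inl i) (Inr a) = 1" for i a
    using gp(3)[of "\<sigma> a"] gp(4)[of "\<sigma> a"] t unfolding P_def linf_def by auto
  have F2: "F < 2" unfolding F_def by auto
  have cons: "alpha_consistent \<alpha> m 2 (rk2 m) (\<lambda>_ _. False) (linf P)"
    unfolding alpha_consistent_def if_False
  proof (intro allI impI)
    fix i j :: nat assume i: "i < 2" and j: "j + 1 < m"
    show "linf P (Inl i) (Inr (rk2 m i (j + 1))) \<ge> linf P (Inl i) (Inr (rk2 m i j)) \<and>
          linf P (Inl i) (Inr (rk2 m i j)) > \<alpha> * linf P (Inl i) (Inr (rk2 m i (j + 1)))"
    proof (cases "i = F")
      case True
      have "\<sigma> (rk2 m i j) = j" "\<sigma> (rk2 m i (j+1)) = j + 1" using j True unfolding \<sigma>_def by (auto simp: rk2_inv)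
      then show ?thesis using dF True gp(1,2)[of j] by auto
    next
      case False
      then show ?thesis using dM al by auto
    qed
  qed
  have sc: "social_cost 2 (linf P) a = g (\<sigma> a) + 1" for a
  proof -
    have "social_cost 2 (linf P) a = linf P (Inl 0) (Inr a) + linf P (Inl 1) (Inr a)"
      unfolding social_cost_def numeral_2_eq_2 by simp
    moreover have "F = 0 \<or> F = 1" unfolding F_def by auto
    ultimately show ?thesis using dF[of a] dM[of 0 a] dM[of 1 a] by auto
  qed
  have "\<mu>^(\<sigma> z) \<le> \<mu>^k" using mu sz by (intro power_decreasing) auto
  then have "t / \<mu>^k \<le> t / \<mu>^(\<sigma> z)" using mu t by (intro divide_left_mono) auto
  then have gz: "g (\<sigma> z) = t + 2" using muk t unfolding g_def gfun_def by auto
  have gw: "\<sigma> w = 0" unfolding w_def \<sigma>_def using m by (simp add: rk2_inv)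
  have wm: "w < m" unfolding w_def \<sigma>_def using m by (simp add: rk2_inv)
  have pos: "social_cost 2 (linf P) a > 0" for a using sc gp(3)[of "\<sigma> a"] t by simp
  have "ereal ((3-u)/(1+u)) = ereal (social_cost 2 (linf P) z / social_cost 2 (linf P) w)"
    using sc gz gw gp(5) t by (simp add: add.commute)
  also have "\<dots> \<le> cost_ratio m 2 (linf P) z"
    using zm wm by (intro ratio_ge pos) auto
  finally show ?thesis using cons linf_metric by blast
qed

lemma alt_le_rule:
  assumes "n \<ge> 1" "valid_profile m n rk"
  shows "distortion_alt \<alpha> m n rk strong (f n rk strong) \<le> distortion_rule \<alpha> m f"
  unfolding distortion_rule_def using assms
  by (intro SUP_upper2[where i="(n, rk, strong)"]) auto

lemma prof2:
  assumes m: "m \<ge> 2" and al: "0 \<le> \<alpha>" "\<alpha> < 1" and vr: "voting_rule m f"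
  shows "ereal ((3 - \<alpha>^(m div 2))/(1 + \<alpha>^(m div 2))) \<le> distortion_rule \<alpha> m f"
proof -
  define x where "x = \<alpha>^(m div 2)"
  have "\<alpha>^(m div 2) \<le> \<alpha>^1" using m al by (intro power_decreasing) auto
  then have x: "0 \<le> x" "x < 1" unfolding x_def using al by auto
  define st :: intensity where "st = (\<lambda>_ _. False)"
  define z where "z = f 2 (rk2 m) st"
  have zm: "z < m" using vr valid2[of m] unfolding voting_rule_def z_def by auto
  have "ereal ((3 - x)/(1 + x)) \<le> distortion_alt \<alpha> m 2 (rk2 m) st z"
    unfolding distortion_alt_def
  proof (rule ereal_le_SUP_approx)
    fix y assume y: "y < (3 - x)/(1 + x)"
    obtain u where u: "x < u" "u < 1" "y \<le> (3-u)/(1+u)"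
    proof (cases "y \<le> 1")
      case True
      have "1 \<le> (3 - (x+1)/2)/(1 + (x+1)/2)" using x by (simp add: field_simps)
      then show ?thesis using that[of "(x+1)/2"] x True by auto
    next
      case False
      have yx: "y * (1 + x) < 3 - x" using y x by (simp add: field_simps)
      have "x < (3-y)/(1+y)" using yx False by (simp add: field_simps)
      moreover have "(3-y)/(1+y) < 1" using False by (simp add: field_simps)
      moreover have "3 - (3-y)/(1+y) = 4*y/(1+y)" "1 + (3-y)/(1+y) = 4/(1+y)"
        using False by (simp_all add: field_simps)
      then have "(3 - (3-y)/(1+y))/(1 + (3-y)/(1+y)) = y" using False by simp
      ultimately show ?thesis using that[of "(3-y)/(1+y)"] by auto
    qed
    obtain d where d: "is_metric_on (carrier m 2) d" "alpha_consistent \<alpha> m 2 (rk2 m) (\<lambda>_ _. False) d"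
      "ereal ((3-u)/(1+u)) \<le> cost_ratio m 2 d z"
      using prof2_metric[OF m al, of u z] u x_def zm by auto
    have "ereal y \<le> cost_ratio m 2 d z" using d(3) u(3) by (meson ereal_less_eq(3) order_trans)
    then show "\<exists>d\<in>{d. is_metric_on (carrier m 2) d \<and> alpha_consistent \<alpha> m 2 (rk2 m) st d}.
       ereal y \<le> cost_ratio m 2 d z" using d unfolding st_def by auto
  qed
  also have "\<dots> \<le> distortion_rule \<alpha> m f" unfolding z_def by (rule alt_le_rule) (auto simp: valid2)
  finally show ?thesis unfolding x_def .
qed

theorem theorem1:
  fixes m :: nat and \<alpha> :: real
    and f :: "nat \<Rightarrow> ranking \<Rightarrow> intensity \<Rightarrow> nat"
  assumes "m \<ge> 2" and "0 \<le> \<alpha>" and "\<alpha> \<le> 1"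
    and "voting_rule m f"
  shows "distortion_rule \<alpha> m f \<ge>
           ereal (1 + 2 * max \<alpha> ((1 - \<alpha> ^ (m div 2)) / (1 + \<alpha> ^ (m div 2))))"
proof -
  define x where "x = \<alpha>^(m div 2)"
  have "\<alpha>^(m div 2) \<le> \<alpha>^1" using assms by (intro power_decreasing) auto
  then have x: "0 \<le> x" "x \<le> \<alpha>" unfolding x_def using assms by auto
  show ?thesis
  proof (cases "\<alpha> \<le> (1 - x)/(1 + x)")
    case True
    have a1: "\<alpha> < 1"
    proof (rule ccontr)
      assume "\<not> \<alpha> < 1"
      then have "\<alpha> = 1" "x = 1" using assms x_def by auto
      then show False using True by simp
    qed
    have "1 + 2 * ((1 - x)/(1 + x)) = (3 - x)/(1 + x)" using x by (simp add: field_simps)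
    then show ?thesis using True prof2[OF assms(1,2) a1 assms(4), folded x_def] by (simp add: max_def flip: x_def)
  next
    case False
    have "0 \<le> (1 - x)/(1 + x)" using x assms by simp
    then have "0 < \<alpha>" using False by simp
    then show ?thesis using False prof1[OF assms(1) _ assms(3,4)] by (simp add: max_def flip: x_def)
  qed
qed

end
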